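(* Let $G$ be a $2$-connected cubic graph with a $2$-cut $C$, let $G_1,G_2$ be its marked $C$-components, and let $v\in V(G_1)$. Then $v$ is $\lambda$-matchable in $G$ if and only if $v$ is $\lambda$-matchable in $G_1$. Consequently, $\lambda(G)=\lambda(G_1)+\lambda(G_2)$.
   Context: Graphs are loopless but may have parallel edges. For a $2$-cut $C$ of a $2$-connected cubic graph $G$, $G-C$ has two components; adding to each an edge joining its two vertices of degree two gives the marked $C$-components. For a vertex $v$ of a cubic graph, a $v$-matching is a spanning subgraph in which $v$ has degree $3$ and every other vertex degree $1$; $v$ is $\lambda$-matchable if one exists; $\lambda$ counts such vertices. *)

theory Defs
  imports Main
begin

text \<open>A (loopless, possibly with parallel edges) multigraph is given by a vertex set V,
an edge set E and an endpoint map ends; each edge has exactly two distinct endpoints.\<close>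

definition multigraph :: "'v set \<Rightarrow> 'e set \<Rightarrow> ('e \<Rightarrow> 'v set) \<Rightarrow> bool" where
  "multigraph V E ends \<longleftrightarrow> finite V \<and> finite E \<and> (\<forall>e\<in>E. ends e \<subseteq> V \<and> card (ends e) = 2)"

definition degree :: "'e set \<Rightarrow> ('e \<Rightarrow> 'v set) \<Rightarrow> 'v \<Rightarrow> nat" where
  "degree E ends v = card {e\<in>E. v \<in> ends e}"

definition cubic :: "'v set \<Rightarrow> 'e set \<Rightarrow> ('e \<Rightarrow> 'v set) \<Rightarrow> bool" where
  "cubic V E ends \<longleftrightarrow> multigraph V E ends \<and> (\<forall>v\<in>V. degree E ends v = 3)"

definition adj_rel :: "'e set \<Rightarrow> ('e \<Rightarrow> 'v set) \<Rightarrow> ('v \<times> 'v) set" where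
  "adj_rel E ends = {(u, w). \<exists>e\<in>E. ends e = {u, w}}"

definition connected_graph :: "'v set \<Rightarrow> 'e set \<Rightarrow> ('e \<Rightarrow> 'v set) \<Rightarrow> bool" where
  "connected_graph V E ends \<longleftrightarrow> (\<forall>u\<in>V. \<forall>w\<in>V. (u, w) \<in> (adj_rel E ends)\<^sup>*)"

definition two_connected :: "'v set \<Rightarrow> 'e set \<Rightarrow> ('e \<Rightarrow> 'v set) \<Rightarrow> bool" where
  "two_connected V E ends \<longleftrightarrow> multigraph V E ends \<and> card V > 2 \<and> connected_graph V E ends \<and>
     (\<forall>x\<in>V. connected_graph (V - {x}) {e\<in>E. x \<notin> ends e} ends)"

definition comp_of :: "'v set \<Rightarrow> 'e set \<Rightarrow> ('e \<Rightarrow> 'v set) \<Rightarrow> 'v \<Rightarrow> 'v set" where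
  "comp_of V E ends v = {w\<in>V. (v, w) \<in> (adj_rel E ends)\<^sup>*}"

definition components :: "'v set \<Rightarrow> 'e set \<Rightarrow> ('e \<Rightarrow> 'v set) \<Rightarrow> 'v set set" where
  "components V E ends = comp_of V E ends ` V"

definition two_cut :: "'v set \<Rightarrow> 'e set \<Rightarrow> ('e \<Rightarrow> 'v set) \<Rightarrow> 'e set \<Rightarrow> bool" where
  "two_cut V E ends C \<longleftrightarrow> C \<subseteq> E \<and> card C = 2 \<and> card (components V (E - C) ends) = 2"

text \<open>Marked C-component on the vertex set V1 (a component of G - C): the edges of G - C
inside V1 (tagged Some) plus one new edge None joining the two vertices of degree two.\<close>
definition marked_edges :: "'e set \<Rightarrow> ('e \<Rightarrow> 'v set) \<Rightarrow> 'e set \<Rightarrow> 'v set \<Rightarrow> 'e option set" where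
  "marked_edges E ends C V1 = Some ` {e\<in>E - C. ends e \<subseteq> V1} \<union> {None}"

definition marked_ends :: "'e set \<Rightarrow> ('e \<Rightarrow> 'v set) \<Rightarrow> 'e set \<Rightarrow> 'v set \<Rightarrow> 'e option \<Rightarrow> 'v set" where
  "marked_ends E ends C V1 x =
     (case x of None \<Rightarrow> {u\<in>V1. degree (E - C) ends u = 2} | Some e \<Rightarrow> ends e)"

definition v_matching :: "'v set \<Rightarrow> 'e set \<Rightarrow> ('e \<Rightarrow> 'v set) \<Rightarrow> 'v \<Rightarrow> 'e set \<Rightarrow> bool" where
  "v_matching V E ends v M \<longleftrightarrow> M \<subseteq> E \<and> degree M ends v = 3 \<and> (\<forall>u\<in>V - {v}. degree M ends u = 1)"

definition lambda_matchable :: "'v set \<Rightarrow> 'e set \<Rightarrow> ('e \<Rightarrow> 'v set) \<Rightarrow> 'v \<Rightarrow> bool" where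
  "lambda_matchable V E ends v \<longleftrightarrow> v \<in> V \<and> (\<exists>M. v_matching V E ends v M)"

definition lambda_count :: "'v set \<Rightarrow> 'e set \<Rightarrow> ('e \<Rightarrow> 'v set) \<Rightarrow> nat" where
  "lambda_count V E ends = card {v\<in>V. lambda_matchable V E ends v}"

end

theory Submission
  imports Defs
begin



lemma hall_aux:
  "\<forall>I N. card I = n \<longrightarrow> finite I \<longrightarrow> (\<forall>i\<in>I. finite (N i)) \<longrightarrow>
     (\<forall>J\<subseteq>I. card J \<le> card (\<Union>(N ` J))) \<longrightarrow>
     (\<exists>f. inj_on f I \<and> (\<forall>i\<in>I. f i \<in> N i))"
proof (induction n rule: less_induct)
  case (less n)
  show ?case
  proof (intro allI impI)
    fix I N
    assume cI: "card I = n" and fI: "finite I" and fN: "\<forall>i\<in>I. finite (N (i::'a)) "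
      and H: "\<forall>J\<subseteq>I. card J \<le> card (\<Union>((N::'a \<Rightarrow> 'b set) ` J))"
    have fU: "finite (\<Union>(N ` J))" if "J \<subseteq> I" for J
      using that fN fI by (meson finite_UN_I finite_subset subsetD)
    have IH: "\<exists>f. inj_on f I' \<and> (\<forall>i\<in>I'. f i \<in> N0 i)"
      if "card I' < n" "finite I'" "\<forall>i\<in>I'. finite (N0 i)" "\<forall>J\<subseteq>I'. card J \<le> card (\<Union>(N0 ` J))"
      for I' and N0 :: "'a \<Rightarrow> 'b set"
      using less.IH[OF that(1), rule_format, OF refl] that by blast
    show "\<exists>f. inj_on f I \<and> (\<forall>i\<in>I. f i \<in> N i)"
    proof (cases "I = {}")
      case True then show ?thesis by auto
    next
      case False
      show ?thesis
      proof (cases "\<exists>J. J \<noteq> {} \<and> J \<subset> I \<and> card (\<Union>(N ` J)) = card J")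
        case True
        then obtain J where J0: "J \<noteq> {}" and JI: "J \<subset> I" and cJ: "card (\<Union>(N ` J)) = card J" by blast
        have fJ: "finite J" using JI fI finite_subset by blast
        have c1: "card J < n" using JI cI fI psubset_card_mono by blast
        have c2: "\<forall>J'\<subseteq>J. card J' \<le> card (\<Union>(N ` J'))" using H JI by blast
        have c3: "\<forall>i\<in>J. finite (N i)" using fN JI by blast
        obtain f1 where f1: "inj_on f1 J" "\<forall>i\<in>J. f1 i \<in> N i"
          using IH[OF c1 fJ c3 c2] by blast
        define NJ where "NJ = \<Union>(N ` J)"
        define N' where "N' = (\<lambda>i. N i - NJ)"
        have "card (I - J) = card I - card J" using JI fJ by (meson card_Diff_subset psubset_imp_subset)
        moreover have "card J > 0" using J0 fJ by (simp add: card_gt_0_iff)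
        moreover have "card J \<le> card I" using JI fI by (simp add: card_mono psubset_imp_subset)
        ultimately have "card (I - J) < n" using cI by linarith
        moreover have "\<forall>J'\<subseteq>I - J. card J' \<le> card (\<Union>(N' ` J'))"
        proof (intro allI impI)
          fix J' assume J': "J' \<subseteq> I - J"
          have fJ': "finite J'" using J' fI finite_subset by blast
          have eq: "\<Union>(N' ` J') = \<Union>(N ` (J \<union> J')) - NJ" unfolding N'_def NJ_def by auto
          have sub: "NJ \<subseteq> \<Union>(N ` (J \<union> J'))" unfolding NJ_def by auto
          have "J \<union> J' \<subseteq> I" using J' JI by blast
          then have "card (J \<union> J') \<le> card (\<Union>(N ` (J \<union> J')))" using H by blast
          moreover have "card (J \<union> J') = card J + card J'" using J' fJ fJ' by (subst card_Un_disjoint) auto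
          moreover have "card (\<Union>(N' ` J')) = card (\<Union>(N ` (J \<union> J'))) - card NJ"
            unfolding eq using sub fU[of "J \<union> J'"] J' JI by (intro card_Diff_subset) (auto intro: finite_subset)
          moreover have "card NJ = card J" using cJ NJ_def by simp
          ultimately show "card J' \<le> card (\<Union>(N' ` J'))" by linarith
        qed
        moreover have "finite (I - J)" using fI by blast
        moreover have "\<forall>i\<in>I - J. finite (N' i)" using fN N'_def by auto
        ultimately have "\<exists>f. inj_on f (I - J) \<and> (\<forall>i\<in>I - J. f i \<in> N' i)"
          by (intro IH)
        then obtain f2 where f2: "inj_on f2 (I - J)" "\<forall>i\<in>I - J. f2 i \<in> N' i" by blast
        define f where "f = (\<lambda>i. if i \<in> J then f1 i else f2 i)"
        have "inj_on f I"
          unfolding inj_on_def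
        proof (intro ballI impI)
          fix x y assume x: "x \<in> I" and y: "y \<in> I" and fxy: "f x = f y"
          show "x = y"
          proof (cases "x \<in> J"; cases "y \<in> J")
            assume "x \<in> J" "y \<in> J" then show ?thesis using fxy f1 unfolding f_def inj_on_def by auto
          next
            assume a: "x \<in> J" "y \<notin> J"
            then have "f x \<in> NJ" using f1 NJ_def f_def by auto
            moreover have "f y \<notin> NJ" using a y f2 N'_def f_def by auto
            ultimately show ?thesis using fxy by simp
          next
            assume a: "x \<notin> J" "y \<in> J"
            then have "f y \<in> NJ" using f1 NJ_def f_def by auto
            moreover have "f x \<notin> NJ" using a x f2 N'_def f_def by auto
            ultimately show ?thesis using fxy by simp
          next
            assume "x \<notin> J" "y \<notin> J" then show ?thesis using fxy f2 x y unfolding f_def inj_on_def by auto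
          qed
        qed
        moreover have "\<forall>i\<in>I. f i \<in> N i" using f1 f2 N'_def f_def by auto
        ultimately show ?thesis by blast
      next
        case False2: False
        obtain i0 where i0: "i0 \<in> I" using False by blast
        have "card {i0} \<le> card (\<Union>(N ` {i0}))" using H i0 by blast
        then have "N i0 \<noteq> {}" by auto
        then obtain b where b: "b \<in> N i0" by blast
        define N' where "N' = (\<lambda>i. N i - {b})"
        have "card I > 0" using i0 fI by (auto simp: card_gt_0_iff)
        then have "card (I - {i0}) < n" using i0 cI fI by simp
        moreover have "\<forall>J'\<subseteq>I - {i0}. card J' \<le> card (\<Union>(N' ` J'))"
        proof (intro allI impI)
          fix J' assume J': "J' \<subseteq> I - {i0}"
          show "card J' \<le> card (\<Union>(N' ` J'))"
          proof (cases "J' = {}")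
            case True then show ?thesis by simp
          next
            case False
            have "J' \<subset> I" using J' i0 by blast
            then have "card (\<Union>(N ` J')) \<noteq> card J'" using False2 False by blast
            moreover have "card J' \<le> card (\<Union>(N ` J'))" using H \<open>J' \<subset> I\<close> by blast
            moreover have "\<Union>(N' ` J') = \<Union>(N ` J') - {b}" unfolding N'_def by auto
            moreover have "card (\<Union>(N ` J') - {b}) \<ge> card (\<Union>(N ` J')) - 1"
              using diff_card_le_card_Diff[of "{b}" "\<Union>(N ` J')"] by simp
            ultimately show ?thesis by simp
          qed
        qed
        moreover have "finite (I - {i0})" using fI by blast
        moreover have "\<forall>i\<in>I - {i0}. finite (N' i)" using fN N'_def by auto
        ultimately have "\<exists>f. inj_on f (I - {i0}) \<and> (\<forall>i\<in>I - {i0}. f i \<in> N' i)"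
          by (intro IH)
        then obtain f2 where f2: "inj_on f2 (I - {i0})" "\<forall>i\<in>I - {i0}. f2 i \<in> N' i" by blast
        define f where "f = f2(i0 := b)"
        have "inj_on f I" unfolding f_def using f2 N'_def i0
          by (smt (verit, ccfv_threshold) DiffD2 Diff_empty Diff_insert0 fun_upd_apply inj_on_def insertCI insertE insert_Diff)
        moreover have "\<forall>i\<in>I. f i \<in> N i" using f2 b N'_def f_def by auto
        ultimately show ?thesis by blast
      qed
    qed
  qed
qed

lemma hall:
  assumes "finite I" "\<forall>i\<in>I. finite (N i)" "\<forall>J\<subseteq>I. card J \<le> card (\<Union>(N ` J))"
  shows "\<exists>f. inj_on f I \<and> (\<forall>i\<in>I. f i \<in> N i)"
  using hall_aux assms by blast




definition rel :: "'v set \<Rightarrow> ('v \<Rightarrow> 'v \<Rightarrow> bool) \<Rightarrow> ('v \<times> 'v) set" where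
  "rel X A = {(a, b). a \<in> X \<and> b \<in> X \<and> A a b}"
definition cmp :: "'v set \<Rightarrow> ('v \<Rightarrow> 'v \<Rightarrow> bool) \<Rightarrow> 'v \<Rightarrow> 'v set" where
  "cmp X A a = {b. (a, b) \<in> (rel X A)\<^sup>*}"
definition cmps :: "'v set \<Rightarrow> ('v \<Rightarrow> 'v \<Rightarrow> bool) \<Rightarrow> 'v set set" where
  "cmps X A = cmp X A ` X"
definition oddc :: "'v set \<Rightarrow> ('v \<Rightarrow> 'v \<Rightarrow> bool) \<Rightarrow> nat" where
  "oddc X A = card {K \<in> cmps X A. odd (card K)}"
definition perfect :: "'v set \<Rightarrow> ('v \<Rightarrow> 'v \<Rightarrow> bool) \<Rightarrow> ('v \<Rightarrow> 'v) \<Rightarrow> bool" where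
  "perfect U A m \<longleftrightarrow> (\<forall>u\<in>U. m u \<in> U \<and> m u \<noteq> u \<and> m (m u) = u \<and> A u (m u))"
definition tutte :: "'v set \<Rightarrow> ('v \<Rightarrow> 'v \<Rightarrow> bool) \<Rightarrow> bool" where
  "tutte U A \<longleftrightarrow> (\<forall>S\<subseteq>U. oddc (U - S) A \<le> card S)"

lemma sum_odd_parity:
  assumes "finite F"
  shows "even (sum f F + card {K \<in> F. odd (f K :: nat)})"
  using assms
proof (induction F rule: finite_induct)
  case empty then show ?case by simp
next
  case (insert x F)
  have e: "{K \<in> insert x F. odd (f K)} = (if odd (f x) then insert x {K \<in> F. odd (f K)} else {K \<in> F. odd (f K)})"
    by auto
  have "x \<notin> {K \<in> F. odd (f K)}" using insert by auto
  moreover have "finite {K \<in> F. odd (f K)}" using insert by auto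
  ultimately show ?case using insert e by (cases "odd (f x)") auto
qed

locale sg =
  fixes A :: "'v \<Rightarrow> 'v \<Rightarrow> bool"
  assumes sym: "A x y \<Longrightarrow> A y x"
begin

lemma rel_sym: "sym (rel X A)"
  using sym unfolding rel_def sym_def by blast

lemma rtr_sym: "(a, b) \<in> (rel X A)\<^sup>* \<Longrightarrow> (b, a) \<in> (rel X A)\<^sup>*"
  using rel_sym sym_rtrancl by (metis symD)

lemma rtr_in: "(a, b) \<in> (rel X A)\<^sup>* \<Longrightarrow> a \<in> X \<Longrightarrow> b \<in> X"
  by (induction rule: rtrancl_induct) (auto simp: rel_def)

lemma cmp_sub: "a \<in> X \<Longrightarrow> cmp X A a \<subseteq> X"
  unfolding cmp_def using rtr_in by blast

lemma cmp_self: "a \<in> cmp X A a"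
  unfolding cmp_def by simp

lemma cmp_eq: assumes "b \<in> cmp X A a" shows "cmp X A b = cmp X A a"
proof -
  have ab: "(a, b) \<in> (rel X A)\<^sup>*" using assms unfolding cmp_def by simp
  have ba: "(b, a) \<in> (rel X A)\<^sup>*" using rtr_sym[OF ab] .
  show ?thesis unfolding cmp_def
  proof (intro set_eqI iffI; simp)
    fix x assume "(b, x) \<in> (rel X A)\<^sup>*" then show "(a, x) \<in> (rel X A)\<^sup>*"
      using rtrancl_trans[OF ab] by blast
  next
    fix x assume "(a, x) \<in> (rel X A)\<^sup>*" then show "(b, x) \<in> (rel X A)\<^sup>*"
      using rtrancl_trans[OF ba] by blast
  qed
qed

lemma cmps_eq: "K \<in> cmps X A \<Longrightarrow> a \<in> K \<Longrightarrow> cmp X A a = K"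
  unfolding cmps_def using cmp_eq by blast

lemma cmps_sub: "K \<in> cmps X A \<Longrightarrow> K \<subseteq> X"
  unfolding cmps_def using cmp_sub by blast

lemma cmps_ne: "K \<in> cmps X A \<Longrightarrow> K \<noteq> {}"
  unfolding cmps_def using cmp_self by blast

lemma cmps_disj: "K \<in> cmps X A \<Longrightarrow> K' \<in> cmps X A \<Longrightarrow> K \<noteq> K' \<Longrightarrow> K \<inter> K' = {}"
proof (rule ccontr)
  assume a: "K \<in> cmps X A" "K' \<in> cmps X A" "K \<noteq> K'" "K \<inter> K' \<noteq> {}"
  then obtain x where "x \<in> K" "x \<in> K'" by blast
  then show False using cmps_eq[OF a(1)] cmps_eq[OF a(2)] a(3) by metis
qed

lemma cmps_Union: "\<Union>(cmps X A) = X"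
proof
  show "\<Union>(cmps X A) \<subseteq> X" unfolding cmps_def using cmp_sub by blast
  show "X \<subseteq> \<Union>(cmps X A)" unfolding cmps_def using cmp_self by blast
qed

lemma cmps_fin: "finite X \<Longrightarrow> finite (cmps X A)"
  unfolding cmps_def by simp

lemma cmps_of: "a \<in> X \<Longrightarrow> cmp X A a \<in> cmps X A"
  unfolding cmps_def by simp

lemma step_cmp: "a \<in> X \<Longrightarrow> b \<in> X \<Longrightarrow> A a b \<Longrightarrow> b \<in> cmp X A a"
  unfolding cmp_def rel_def by auto

lemma cmp_closed_eq:
  assumes "Y \<subseteq> X" "\<forall>a\<in>Y. \<forall>b\<in>X - Y. \<not> A a b" "a \<in> Y"
  shows "cmp X A a = cmp Y A a"
proof
  show "cmp Y A a \<subseteq> cmp X A a"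
    unfolding cmp_def using rtrancl_mono[of "rel Y A" "rel X A"] assms(1) unfolding rel_def by blast
next
  have "(a, b) \<in> (rel Y A)\<^sup>*" if "(a, b) \<in> (rel X A)\<^sup>*" for b
    using that
  proof (induction rule: rtrancl_induct)
    case base then show ?case by simp
  next
    case (step y z)
    have "y \<in> Y" using rtr_in[OF step.IH] assms(3) .
    moreover have "z \<in> X" "A y z" using step.hyps(2) unfolding rel_def by auto
    ultimately have "z \<in> Y" using assms(2) by blast
    then have "(y, z) \<in> rel Y A" using \<open>y \<in> Y\<close> \<open>A y z\<close> unfolding rel_def by auto
    then show ?case using step.IH by simp
  qed
  then show "cmp X A a \<subseteq> cmp Y A a" unfolding cmp_def by blast
qed

lemma cmps_split:
  assumes "Y \<subseteq> X" "\<forall>a\<in>Y. \<forall>b\<in>X - Y. \<not> A a b"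
  shows "cmps X A = cmps Y A \<union> cmps (X - Y) A"
proof -
  have c2: "\<forall>a\<in>X - Y. \<forall>b\<in>X - (X - Y). \<not> A a b" using assms(2) sym by blast
  have "cmp X A a = cmp Y A a" if "a \<in> Y" for a using cmp_closed_eq[OF assms that] .
  moreover have "cmp X A a = cmp (X - Y) A a" if "a \<in> X - Y" for a
    using cmp_closed_eq[OF _ c2 that] by blast
  ultimately have "cmp X A ` Y = cmp Y A ` Y" "cmp X A ` (X - Y) = cmp (X - Y) A ` (X - Y)"
    by (auto intro!: image_cong)
  moreover have "X = Y \<union> (X - Y)" using assms(1) by blast
  ultimately show ?thesis unfolding cmps_def by (metis image_Un)
qed

lemma cmps_closed:
  assumes "K \<in> cmps X A"
  shows "\<forall>a\<in>K. \<forall>b\<in>X - K. \<not> A a b"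
proof (intro ballI notI)
  fix a b assume a: "a \<in> K" and b: "b \<in> X - K" and ab: "A a b"
  have "b \<in> cmp X A a" using step_cmp[of a X b] a b ab cmps_sub[OF assms] by blast
  then show False using cmps_eq[OF assms a] b by blast
qed

lemma cmps_self:
  assumes "K \<in> cmps X A"
  shows "cmps K A = {K}"
proof -
  have "cmp K A a = K" if "a \<in> K" for a
    using cmp_closed_eq[OF cmps_sub[OF assms] cmps_closed[OF assms] that] cmps_eq[OF assms that] by simp
  then show ?thesis unfolding cmps_def using cmps_ne[OF assms] by blast
qed

lemma cmps_remove:
  assumes D: "D \<in> cmps X A" and T: "T \<subseteq> D"
  shows "cmps (X - T) A = (cmps X A - {D}) \<union> cmps (D - T) A"
proof -
  have s1: "cmps X A = {D} \<union> cmps (X - D) A"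
    using cmps_split[OF cmps_sub[OF D] cmps_closed[OF D]] cmps_self[OF D] by simp
  have "D \<notin> cmps (X - D) A"
  proof
    assume "D \<in> cmps (X - D) A"
    then have "D \<subseteq> X - D" by (rule cmps_sub)
    then show False using cmps_ne[OF D] by blast
  qed
  then have s2: "cmps (X - D) A = cmps X A - {D}" using s1 by auto
  have cl0: "\<forall>a\<in>D. \<forall>b\<in>X - D. \<not> A a b" using cmps_closed[OF D] .
  have cl: "\<forall>a\<in>D - T. \<forall>b\<in>(X - T) - (D - T). \<not> A a b"
  proof (intro ballI)
    fix a b assume "a \<in> D - T" "b \<in> (X - T) - (D - T)"
    then have "a \<in> D" "b \<in> X - D" by auto
    then show "\<not> A a b" using cl0 by blast
  qed
  have "D - T \<subseteq> X - T" using cmps_sub[OF D] by blast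
  from cmps_split[OF this cl] have e: "cmps (X - T) A = cmps (D - T) A \<union> cmps ((X - T) - (D - T)) A" .
  have "(X - T) - (D - T) = X - D" using T by blast
  then show ?thesis using s2 e by (simp add: Un_commute)
qed

lemma cmps_finite_each: "finite X \<Longrightarrow> K \<in> cmps X A \<Longrightarrow> finite K"
  using cmps_sub finite_subset by blast

lemma oddc_remove:
  assumes fX: "finite X" and D: "D \<in> cmps X A" and T: "T \<subseteq> D"
  shows "oddc (X - T) A + (if odd (card D) then 1 else 0) = oddc X A + oddc (D - T) A"
proof -
  let ?O = "\<lambda>F. {K \<in> F. odd (card K)}"
  have disj: "(cmps X A - {D}) \<inter> cmps (D - T) A = {}"
  proof (rule ccontr)
    assume "\<not> ?thesis"
    then obtain K where K1: "K \<in> cmps X A" "K \<noteq> D" and K2: "K \<in> cmps (D - T) A" by blast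
    have "K \<subseteq> D" using cmps_sub[OF K2] by blast
    moreover have "K \<inter> D = {}" using cmps_disj[OF K1(1) D K1(2)] .
    ultimately show False using cmps_ne[OF K2] by blast
  qed
  have f1: "finite (cmps X A)" using cmps_fin[OF fX] .
  have f2: "finite (cmps (D - T) A)" using cmps_fin fX cmps_finite_each[OF fX D] by blast
  have "oddc (X - T) A = card (?O (cmps X A - {D}) \<union> ?O (cmps (D - T) A))"
    unfolding oddc_def cmps_remove[OF D T] by (rule arg_cong[where f=card]) blast
  also have "\<dots> = card (?O (cmps X A - {D})) + card (?O (cmps (D - T) A))"
    using disj f1 f2 by (intro card_Un_disjoint) auto
  finally have e1: "oddc (X - T) A = card (?O (cmps X A - {D})) + oddc (D - T) A"
    unfolding oddc_def by simp
  have "card (?O (cmps X A)) = card (?O (cmps X A - {D})) + (if odd (card D) then 1 else 0)"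
  proof (cases "odd (card D)")
    case True
    then have "?O (cmps X A) = insert D (?O (cmps X A - {D}))" using D by blast
    then show ?thesis using True f1 by simp
  next
    case False
    then have "?O (cmps X A) = ?O (cmps X A - {D})" by blast
    then show ?thesis using False by simp
  qed
  then show ?thesis using e1 unfolding oddc_def by simp
qed

lemma parity:
  assumes "finite X"
  shows "even (card X + oddc X A)"
proof -
  have "card X = card (\<Union>(cmps X A))" by (simp add: cmps_Union)
  also have "\<dots> = sum card (cmps X A)"
    using cmps_fin[OF assms] cmps_finite_each[OF assms] cmps_disj
    by (intro card_Union_disjoint) (auto simp: pairwise_def disjnt_def)
  finally show ?thesis unfolding oddc_def using sum_odd_parity[OF cmps_fin[OF assms], of card] by simp
qed

lemma hall_cmps:
  assumes S: "S \<subseteq> U" and AA: "AA \<subseteq> cmps (U - S) A"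
  shows "AA \<subseteq> cmps (U - {s \<in> S. \<exists>k\<in>\<Union>AA. A s k}) A"
proof -
  define T where "T = {s \<in> S. \<exists>k\<in>\<Union>AA. A s k}"
  define Y where "Y = \<Union>AA"
  have YS: "Y \<subseteq> U - S" using AA cmps_sub Y_def by blast
  have cl1: "\<forall>a\<in>Y. \<forall>b\<in>(U - S) - Y. \<not> A a b"
  proof (intro ballI notI)
    fix a b assume a: "a \<in> Y" and b: "b \<in> U - S - Y" and ab: "A a b"
    obtain K where K: "K \<in> AA" "a \<in> K" using a Y_def by blast
    have KK: "K \<in> cmps (U - S) A" using K AA by blast
    have "b \<in> K" using cmps_closed[OF KK] K b ab by blast
    then show False using b K Y_def by blast
  qed
  have cl2: "\<forall>a\<in>Y. \<forall>b\<in>(U - T) - Y. \<not> A a b"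
  proof (intro ballI notI)
    fix a b assume a: "a \<in> Y" and b: "b \<in> U - T - Y" and ab: "A a b"
    show False
    proof (cases "b \<in> S")
      case True
      then have "b \<in> T" using a ab sym unfolding T_def Y_def by blast
      then show False using b by blast
    next
      case False
      then show False using cl1 a b ab by blast
    qed
  qed
  have YT: "Y \<subseteq> U - T" using YS T_def by blast
  have "AA \<subseteq> cmps Y A"
  proof
    fix K assume K: "K \<in> AA"
    have "K \<in> cmps Y A \<union> cmps ((U - S) - Y) A" using cmps_split[OF YS cl1] K AA by blast
    moreover have "K \<notin> cmps ((U - S) - Y) A"
    proof
      assume "K \<in> cmps ((U - S) - Y) A"
      then have "K \<subseteq> (U - S) - Y" "K \<noteq> {}" using cmps_sub cmps_ne by blast+
      then show False using K Y_def by blast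
    qed
    ultimately show "K \<in> cmps Y A" by blast
  qed
  then show ?thesis using cmps_split[OF YT cl2] T_def by blast
qed

end



lemma ar1: "(1::nat) \<le> c \<Longrightarrow> a = c - 1 \<Longrightarrow> even (a + b) \<Longrightarrow> \<not> odd c \<Longrightarrow> 1 \<le> b"
proof -
  assume h: "(1::nat) \<le> c" "a = c - 1" "even (a + b)" "\<not> odd c"
  then have "odd a" by simp
  then have "odd b" using h(3) by simp
  then show "1 \<le> b" by (cases b) auto
qed
lemma ar2: "even (a + b) \<Longrightarrow> a = c - 1 - t \<Longrightarrow> \<not> b \<le> t \<Longrightarrow> odd c \<Longrightarrow> t \<le> c - 1 \<Longrightarrow> (b::nat) \<ge> t + 2"
proof -
  assume h: "even (a + b)" "a = c - 1 - t" "\<not> b \<le> t" "odd c" "t \<le> c - 1"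
  have "even (c - 1)" using h(4) by simp
  then have "even (a + t)" using h(2,5) by (metis le_add_diff_inverse2)
  then have "even (b + t)" using h(1) by (metis even_add)
  moreover have "b \<noteq> t + 1" using \<open>even (b+t)\<close> by auto
  ultimately show ?thesis using h(3) by linarith
qed

context sg begin

lemma tutte_aux:
  "\<forall>U. card U = n \<longrightarrow> finite U \<longrightarrow> tutte U A \<longrightarrow> (\<exists>m. perfect U A m)"
proof (induction n rule: less_induct)
  case (less n)
  show ?case
  proof (intro allI impI)
    fix U :: "'v set"
    assume cU: "card U = n" and fU: "finite U" and tU: "tutte U A"
    have IH: "\<exists>m. perfect U' A m" if "card U' < n" "finite U'" "tutte U' A" for U'
      using less.IH[OF that(1), rule_format, OF refl that(2,3)] .
    have tut: "oddc (U - S') A \<le> card S'" if "S' \<subseteq> U" for S'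
      using tU that unfolding tutte_def by blast
    define B where "B = {S. S \<subseteq> U \<and> oddc (U - S) A = card S}"
    have "{} \<in> B" using tut[of "{}"] unfolding B_def by simp
    moreover have "finite B" unfolding B_def using fU by simp
    ultimately obtain S where SB: "S \<in> B" and Smax: "\<forall>S'\<in>B. S \<le> S' \<longrightarrow> S = S'"
      using finite_has_maximal[of B] by blast
    have SU: "S \<subseteq> U" and oS: "oddc (U - S) A = card S" using SB unfolding B_def by auto
    have fS: "finite S" using SU fU finite_subset by blast
    have maxi: "S' = S" if "S \<subseteq> S'" "S' \<subseteq> U" "oddc (U - S') A \<ge> card S'" for S'
    proof -
      have "S' \<in> B" unfolding B_def using that tut[OF that(2)] by simp
      then show ?thesis using Smax that(1) by blast
    qed
    define KS where "KS = cmps (U - S) A"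
    have fUS: "finite (U - S)" using fU by blast
    have fKS: "finite KS" unfolding KS_def using cmps_fin[OF fUS] .
    have KsubU: "K \<subseteq> U - S" if "K \<in> KS" for K using cmps_sub that KS_def by blast
    have fK: "finite K" if "K \<in> KS" for K using KsubU[OF that] fU finite_subset by blast
    have oddK: "odd (card K)" if K: "K \<in> KS" for K
    proof (rule ccontr)
      assume ev: "\<not> odd (card K)"
      obtain v where v: "v \<in> K" using cmps_ne K KS_def by blast
      have KD: "K \<in> cmps (U - S) A" using K KS_def by simp
      have e1: "oddc (U - S - {v}) A + 0 = oddc (U - S) A + oddc (K - {v}) A"
        using oddc_remove[OF fUS KD, of "{v}"] v ev by simp
      have "finite (K - {v})" using fK[OF K] by blast
      then have par: "even (card (K - {v}) + oddc (K - {v}) A)" by (rule parity)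
      have "card K \<ge> 1" using v fK[OF K] by (metis One_nat_def Suc_leI card_gt_0_iff empty_iff)
      moreover have "card (K - {v}) = card K - 1" using v fK[OF K] by simp
      ultimately have "oddc (K - {v}) A \<ge> 1" using par ev ar1 by blast
      moreover have "U - S - {v} = U - (insert v S)" by blast
      moreover have "v \<notin> S" using v KsubU[OF K] by blast
      ultimately have "oddc (U - insert v S) A \<ge> card (insert v S)" using e1 oS fS by simp
      moreover have "insert v S \<subseteq> U" using v KsubU[OF K] SU by blast
      ultimately have "insert v S = S" using maxi by blast
      then show False using \<open>v \<notin> S\<close> by blast
    qed
    have fc: "\<exists>m. perfect (K - {v}) A m" if K: "K \<in> KS" and v: "v \<in> K" for K v
    proof (rule IH)
      have "K - {v} \<subset> U" using K v KsubU[OF K] by blast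
      then have "card (K - {v}) < card U" using fU psubset_card_mono by blast
      then show "card (K - {v}) < n" using cU by simp
      show "finite (K - {v})" using fK[OF K] by simp
      show "tutte (K - {v}) A"
        unfolding tutte_def
      proof (intro allI impI)
        fix T assume T: "T \<subseteq> K - {v}"
        show "oddc (K - {v} - T) A \<le> card T"
        proof (rule ccontr)
          assume big: "\<not> ?thesis"
          have KD: "K \<in> cmps (U - S) A" using K KS_def by simp
          have fT: "finite T" using T fK[OF K] finite_subset by blast
          have vT: "v \<notin> T" using T by blast
          have "finite (K - {v} - T)" using fK[OF K] by blast
          then have par: "even (card (K - {v} - T) + oddc (K - {v} - T) A)"
            by (rule parity)
          have "card (K - {v} - T) = card (K - {v}) - card T"
            using T fK[OF K] by (intro card_Diff_subset) (auto intro: finite_subset)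
          then have cK: "card (K - {v} - T) = card K - 1 - card T"
            using v fK[OF K] by simp
          have "card T \<le> card (K - {v})" using T fK[OF K] by (intro card_mono) auto
          then have "card T \<le> card K - 1" using v fK[OF K] by simp
          then have o2: "oddc (K - {v} - T) A \<ge> card T + 2"
            by (rule ar2[OF par cK big oddK[OF K]])
          have "insert v T \<subseteq> K" using T v by blast
          from oddc_remove[OF fUS KD this]
          have "oddc (U - S - insert v T) A + 1 = card S + oddc (K - insert v T) A"
            using oddK[OF K] oS by simp
          moreover have "K - insert v T = K - {v} - T" by blast
          moreover have "U - S - insert v T = U - (S \<union> insert v T)" by blast
          moreover have "card (S \<union> insert v T) = card S + card T + 1"
          proof -
            have "S \<inter> insert v T = {}" using KsubU[OF K] \<open>insert v T \<subseteq> K\<close> by blast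
            moreover have "finite (insert v T)" using fT by simp
            ultimately have "card (S \<union> insert v T) = card S + card (insert v T)"
              using fS card_Un_disjoint by blast
            then show ?thesis using fT vT by simp
          qed
          ultimately have "oddc (U - (S \<union> insert v T)) A \<ge> card (S \<union> insert v T)" using o2 by simp
          moreover have "S \<union> insert v T \<subseteq> U" using KsubU[OF K] \<open>insert v T \<subseteq> K\<close> SU by blast
          ultimately have "S \<union> insert v T = S" using maxi by blast
          then show False using KsubU[OF K] v by blast
        qed
      qed
    qed
    define N where "N = (\<lambda>K. {s \<in> S. \<exists>k\<in>K. A s k})"
    have hallc: "\<forall>J\<subseteq>KS. card J \<le> card (\<Union>(N ` J))"
    proof (intro allI impI)
      fix J assume J: "J \<subseteq> KS"
      define T where "T = {s \<in> S. \<exists>k\<in>\<Union>J. A s k}"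
      have UT: "\<Union>(N ` J) = T" unfolding N_def T_def by blast
      have "J \<subseteq> cmps (U - T) A" using hall_cmps[OF SU, of J] J KS_def T_def by blast
      then have "J \<subseteq> {K \<in> cmps (U - T) A. odd (card K)}" using oddK J by blast
      moreover have "finite (cmps (U - T) A)" using cmps_fin fU by blast
      ultimately have "card J \<le> oddc (U - T) A" unfolding oddc_def by (simp add: card_mono)
      also have "\<dots> \<le> card T" using tut[of T] T_def SU by blast
      finally show "card J \<le> card (\<Union>(N ` J))" using UT by simp
    qed
    have "\<forall>K\<in>KS. finite (N K)" unfolding N_def using fS by simp
    then obtain f where finj: "inj_on f KS" and fN: "\<forall>K\<in>KS. f K \<in> N K"
      using hall[OF fKS _ hallc] by blast
    have fS': "f ` KS \<subseteq> S" using fN N_def by blast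
    have "{K \<in> KS. odd (card K)} = KS" using oddK by blast
    then have "card KS = card S" using oS unfolding oddc_def KS_def by simp
    then have fKS_eq: "f ` KS = S" using fS' finj fS by (metis card_image card_subset_eq)
    define g where "g = inv_into KS f"
    have gS: "g s \<in> KS" "f (g s) = s" if "s \<in> S" for s
      using that fKS_eq g_def by (auto intro: inv_into_into f_inv_into_f)
    have gf: "g (f K) = K" if "K \<in> KS" for K using finj that g_def by simp
    define kk where "kk = (\<lambda>K. SOME k. k \<in> K \<and> A (f K) k)"
    have kk: "kk K \<in> K \<and> A (f K) (kk K)" if "K \<in> KS" for K
    proof -
      have "\<exists>k. k \<in> K \<and> A (f K) k" using fN that N_def by blast
      then show ?thesis unfolding kk_def by (rule someI_ex)
    qed
    define mm where "mm = (\<lambda>K. SOME m. perfect (K - {kk K}) A m)"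
    have mm: "perfect (K - {kk K}) A (mm K)" if "K \<in> KS" for K
      unfolding mm_def using fc[OF that] kk[OF that] by (metis someI_ex)
    define cK where "cK = (\<lambda>u. cmp (U - S) A u)"
    have cK: "cK u \<in> KS" "u \<in> cK u" if "u \<in> U - S" for u
      using that unfolding cK_def KS_def by (auto intro: cmps_of cmp_self)
    have cKe: "cK u = K" if "K \<in> KS" "u \<in> K" for K u
      using that cmps_eq unfolding cK_def KS_def by blast
    define m where "m = (\<lambda>u. if u \<in> S then kk (g u) else if u = kk (cK u) then f (cK u) else mm (cK u) u)"
    have "perfect U A m"
      unfolding perfect_def
    proof (intro ballI)
      fix u assume uU: "u \<in> U"
      show "m u \<in> U \<and> m u \<noteq> u \<and> m (m u) = u \<and> A u (m u)"
      proof (cases "u \<in> S")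
        case True
        define K where "K = g u"
        have K: "K \<in> KS" "f K = u" using gS True K_def by auto
        have mu: "m u = kk K" using True unfolding m_def K_def by simp
        have kK: "kk K \<in> K" "A u (kk K)" using kk[OF K(1)] K(2) by auto
        have nS: "kk K \<notin> S" using KsubU[OF K(1)] kK by blast
        have "cK (kk K) = K" using cKe K(1) kK(1) by blast
        then have "m (kk K) = u" using nS K unfolding m_def by simp
        then show ?thesis using mu kK nS KsubU[OF K(1)] True by auto
      next
        case False
        define K where "K = cK u"
        have K: "K \<in> KS" "u \<in> K" using cK[of u] uU False K_def by auto
        show ?thesis
        proof (cases "u = kk K")
          case True
          have mu: "m u = f K" using False True unfolding m_def K_def by simp
          have fKS: "f K \<in> S" using fS' K by blast
          have "m (f K) = kk (g (f K))" using fKS unfolding m_def by simp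
          also have "\<dots> = u" using gf[OF K(1)] True by simp
          finally have "m (f K) = u" .
          moreover have "A u (f K)" using kk[OF K(1)] True sym by blast
          ultimately show ?thesis using mu fKS SU False by auto
        next
          case nk: False
          have mu: "m u = mm K u" using False nk unfolding m_def K_def by simp
          have uK: "u \<in> K - {kk K}" using K nk by blast
          have P: "mm K u \<in> K - {kk K}" "mm K u \<noteq> u" "mm K (mm K u) = u" "A u (mm K u)"
            using mm[OF K(1)] uK unfolding perfect_def by blast+
          have nS: "mm K u \<notin> S" using P(1) KsubU[OF K(1)] by blast
          have "cK (mm K u) = K" using cKe K(1) P(1) by blast
          then have "m (mm K u) = mm K (mm K u)" using nS P(1) unfolding m_def by simp
          then show ?thesis using mu P KsubU[OF K(1)] by auto
        qed
      qed
    qed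
    then show "\<exists>m. perfect U A m" by blast
  qed
qed

theorem tutte_thm: "finite U \<Longrightarrow> tutte U A \<Longrightarrow> \<exists>m. perfect U A m"
  using tutte_aux by blast

end



lemma card_filter_sum: "finite F \<Longrightarrow> card {e \<in> F. P e} = (\<Sum>e\<in>F. if P e then 1 else 0)"
  using sum.inter_filter[of F "\<lambda>_. (1::nat)" P] by simp

lemma handshake:
  assumes "finite F" "finite X"
  shows "(\<Sum>u\<in>X. card {e \<in> F. u \<in> ends e}) = (\<Sum>e\<in>F. card (ends e \<inter> X))"
proof -
  have "(\<Sum>u\<in>X. card {e \<in> F. u \<in> ends e}) = (\<Sum>u\<in>X. \<Sum>e\<in>F. if u \<in> ends e then 1 else 0)"
    using card_filter_sum[OF assms(1)] by simp
  also have "\<dots> = (\<Sum>e\<in>F. \<Sum>u\<in>X. if u \<in> ends e then 1 else 0)" by (rule sum.swap)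
  also have "\<dots> = (\<Sum>e\<in>F. card (ends e \<inter> X))"
  proof (rule sum.cong[OF refl])
    fix e
    have "ends e \<inter> X = {u \<in> X. u \<in> ends e}" by blast
    then show "(\<Sum>u\<in>X. if u \<in> ends e then 1 else 0) = card (ends e \<inter> X)"
      using card_filter_sum[OF assms(2), of "\<lambda>u. u \<in> ends e"] by simp
  qed
  finally show ?thesis .
qed

lemma cross_edge:
  assumes "(u, w) \<in> (adj_rel E ends)\<^sup>*" "u \<in> K" "w \<notin> K"
  shows "\<exists>e\<in>E. ends e \<inter> K \<noteq> {} \<and> \<not> ends e \<subseteq> K"
proof -
  have "\<forall>y. (u, y) \<in> (adj_rel E ends)\<^sup>* \<longrightarrow> y \<notin> K \<longrightarrow> (\<exists>e\<in>E. ends e \<inter> K \<noteq> {} \<and> \<not> ends e \<subseteq> K)"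
  proof (intro allI impI)
    fix y assume "(u, y) \<in> (adj_rel E ends)\<^sup>*" "y \<notin> K"
    then show "\<exists>e\<in>E. ends e \<inter> K \<noteq> {} \<and> \<not> ends e \<subseteq> K"
    proof (induction rule: rtrancl_induct)
      case base then show ?case using assms(2) by blast
    next
      case (step y z)
      show ?case
      proof (cases "y \<in> K")
        case True
        obtain e where "e \<in> E" "ends e = {y, z}" using step.hyps(2) unfolding adj_rel_def by blast
        then show ?thesis using True step.prems by blast
      next
        case False then show ?thesis using step.IH by blast
      qed
    qed
  qed
  then show ?thesis using assms by blast
qed

locale cg =
  fixes V :: "'v set" and E :: "'e set" and ends :: "'e \<Rightarrow> 'v set"
  assumes tc: "two_connected V E ends" and cub: "cubic V E ends"
begin

definition bd :: "'v set \<Rightarrow> 'e set" where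
  "bd K = {e \<in> E. ends e \<inter> K \<noteq> {} \<and> \<not> ends e \<subseteq> K}"

lemma finV: "finite V" and finE: "finite E" and endsV: "e \<in> E \<Longrightarrow> ends e \<subseteq> V"
  and ends2: "e \<in> E \<Longrightarrow> card (ends e) = 2"
  using cub unfolding cubic_def multigraph_def by auto

lemma deg3: "x \<in> V \<Longrightarrow> card {e \<in> E. x \<in> ends e} = 3"
  using cub unfolding cubic_def degree_def by auto

lemma conn: "connected_graph V E ends" using tc unfolding two_connected_def by simp

lemma nocut: "x \<in> V \<Longrightarrow> connected_graph (V - {x}) {e \<in> E. x \<notin> ends e} ends"
  using tc unfolding two_connected_def by simp

lemma ends_pair: assumes "e \<in> E" obtains p q where "ends e = {p, q}" "p \<noteq> q"
  using ends2[OF assms] by (metis card_2_iff)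

lemma bd_ne:
  assumes "K \<subseteq> V" "K \<noteq> {}" "K \<noteq> V"
  shows "bd K \<noteq> {}"
proof -
  obtain u w where "u \<in> K" "w \<in> V" "w \<notin> K" using assms by blast
  then have "(u, w) \<in> (adj_rel E ends)\<^sup>*" using conn assms(1) unfolding connected_graph_def by blast
  from cross_edge[OF this \<open>u \<in> K\<close> \<open>w \<notin> K\<close>] show ?thesis unfolding bd_def by blast
qed

lemma bd_fin: "finite (bd K)" unfolding bd_def using finE by simp

lemma bd_not1:
  assumes K: "K \<subseteq> V" "K \<noteq> {}" "K \<noteq> V" and b1: "bd K = {e}"
  shows False
proof -
  have eE: "e \<in> E" and em: "ends e \<inter> K \<noteq> {}" and en: "\<not> ends e \<subseteq> K" using b1 unfolding bd_def by auto
  obtain p where p: "p \<in> ends e" "p \<in> K" using em by blast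
  obtain q where q: "q \<in> ends e" "q \<notin> K" using en by blast
  have pV: "p \<in> V" using p K by blast
  have qV: "q \<in> V" using q endsV[OF eE] by blast
  have "card {e \<in> E. p \<in> ends e} = 3" using deg3[OF pV] .
  then obtain e2 where e2: "e2 \<in> E" "p \<in> ends e2" "e2 \<noteq> e"
  proof -
    have "{e \<in> E. p \<in> ends e} \<noteq> {e}" using \<open>card {e \<in> E. p \<in> ends e} = 3\<close> by force
    moreover have "e \<in> {e \<in> E. p \<in> ends e}" using eE p by simp
    ultimately obtain e2 where "e2 \<in> {e \<in> E. p \<in> ends e}" "e2 \<noteq> e" by blast
    then show ?thesis using that by blast
  qed
  have "e2 \<notin> bd K" using b1 e2 by blast
  then have e2K: "ends e2 \<subseteq> K" using e2 p unfolding bd_def by blast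
  obtain a b where ab: "ends e2 = {a, b}" "a \<noteq> b" using ends_pair[OF e2(1)] by blast
  obtain p' where p': "p' \<in> K" "p' \<noteq> p" using ab e2K by (metis insert_subset)
  have p'V: "p' \<in> V - {p}" using p' K by blast
  have qV': "q \<in> V - {p}" using qV q p by blast
  have "(p', q) \<in> (adj_rel {e \<in> E. p \<notin> ends e} ends)\<^sup>*"
    using nocut[OF pV] p'V qV' unfolding connected_graph_def by blast
  from cross_edge[OF this, of "K - {p}"] p' q
  obtain e3 where e3: "e3 \<in> E" "p \<notin> ends e3" "ends e3 \<inter> (K - {p}) \<noteq> {}" "\<not> ends e3 \<subseteq> K - {p}" by blast
  then have "e3 \<in> bd K" unfolding bd_def by blast
  then have "e3 = e" using b1 by blast
  then show False using e3 p by blast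
qed

lemma bd_ge2:
  assumes "K \<subseteq> V" "K \<noteq> {}" "K \<noteq> V"
  shows "card (bd K) \<ge> 2"
proof -
  have "card (bd K) \<noteq> 0" using bd_ne[OF assms] bd_fin by simp
  moreover have "card (bd K) \<noteq> 1" using bd_not1[OF assms] by (metis card_1_singletonE)
  ultimately show ?thesis by linarith
qed

lemma card_ends_K:
  assumes "e \<in> E"
  shows "card (ends e \<inter> K) = 2 * (if ends e \<subseteq> K then 1 else 0) + (if e \<in> bd K then 1 else 0)"
proof -
  obtain p q where pq: "ends e = {p, q}" "p \<noteq> q" using ends_pair[OF assms] by blast
  show ?thesis unfolding bd_def using assms pq by (cases "p \<in> K"; cases "q \<in> K") auto
qed

lemma bd_count:
  assumes "K \<subseteq> V"
  shows "3 * card K = 2 * card {e \<in> E. ends e \<subseteq> K} + card (bd K)"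
proof -
  have fK: "finite K" using assms finV finite_subset by blast
  have "(\<Sum>u\<in>K. card {e \<in> E. u \<in> ends e}) = (\<Sum>u\<in>K. 3)"
    using deg3 assms by (intro sum.cong) auto
  then have "3 * card K = (\<Sum>e\<in>E. card (ends e \<inter> K))" using handshake[OF finE fK, of ends] by simp
  also have "\<dots> = (\<Sum>e\<in>E. 2 * (if ends e \<subseteq> K then 1 else 0) + (if e \<in> bd K then 1 else 0))"
    using card_ends_K by (intro sum.cong) auto
  also have "\<dots> = 2 * (\<Sum>e\<in>E. (if ends e \<subseteq> K then 1 else 0)) + (\<Sum>e\<in>E. (if e \<in> bd K then 1 else 0))"
    by (simp add: sum.distrib sum_distrib_left)
  also have "\<dots> = 2 * card {e \<in> E. ends e \<subseteq> K} + card {e \<in> E. e \<in> bd K}"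
    using card_filter_sum[OF finE] by simp
  also have "{e \<in> E. e \<in> bd K} = bd K" unfolding bd_def by blast
  finally show ?thesis .
qed

lemma bd_ge3:
  assumes "K \<subseteq> V" "K \<noteq> {}" "K \<noteq> V" "odd (card K)"
  shows "card (bd K) \<ge> 3"
proof -
  have "odd (3 * card K)" using assms(4) by simp
  then have "odd (card (bd K))" using bd_count[OF assms(1)] by (metis even_add even_mult_iff even_numeral)
  moreover have "card (bd K) \<ge> 2" using bd_ge2[OF assms(1-3)] .
  ultimately show ?thesis by (metis dvd_refl le_antisym not_less_eq_eq numeral_2_eq_2 numeral_3_eq_3)
qed

definition adj :: "'v \<Rightarrow> 'v \<Rightarrow> bool" where
  "adj u w \<longleftrightarrow> (\<exists>e\<in>E. ends e = {u, w})"

lemma adj_sym: "adj x y \<Longrightarrow> adj y x" unfolding adj_def by (simp add: insert_commute)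

end




lemma ar3:
  assumes "3 * q \<le> 3 * s + (4::nat)" "even (w - s + q)" "even w" "s \<le> w"
  shows "q \<le> s"
proof (rule ccontr)
  assume "\<not> q \<le> s"
  then have "q = s + 1" using assms(1) by linarith
  then have "w - s + q = w + 1" using assms(4) by simp
  then show False using assms(2,3) by simp
qed

context cg begin

lemma sg_adj: "sg adj" by (rule sg.intro) (rule adj_sym)

lemma adj_of_edge:
  assumes "e \<in> E" "p \<in> ends e" "r \<in> ends e" "p \<noteq> r"
  shows "ends e = {p, r}" "adj p r"
proof -
  obtain a b where ab: "ends e = {a, b}" "a \<noteq> b" using ends_pair[OF assms(1)] by blast
  then show "ends e = {p, r}" using assms by auto
  then show "adj p r" using assms(1) unfolding adj_def by blast
qed

lemma pm_exists:
  assumes W: "W \<subseteq> V" "W \<noteq> V" "even (card W)" "card (bd W) \<le> 4"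
  shows "\<exists>m. perfect W adj m"
proof -
  have fW: "finite W" using W(1) finV finite_subset by blast
  have "tutte W adj" unfolding tutte_def
  proof (intro allI impI)
    fix S assume S: "S \<subseteq> W"
    have fS: "finite S" using S fW finite_subset by blast
    define Q where "Q = {K \<in> cmps (W - S) adj. odd (card K)}"
    have fQ: "finite Q" unfolding Q_def using sg.cmps_fin[OF sg_adj, of "W - S"] fW by simp
    have KQ: "K \<in> cmps (W - S) adj" "K \<subseteq> W - S" "K \<noteq> {}" "odd (card K)" if "K \<in> Q" for K
      using that sg.cmps_sub[OF sg_adj] sg.cmps_ne[OF sg_adj] unfolding Q_def by blast+
    have b3: "card (bd K) \<ge> 3" if "K \<in> Q" for K
    proof (rule bd_ge3)
      show "K \<subseteq> V" using KQ[OF that] W by blast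
      show "K \<noteq> {}" using KQ[OF that] by blast
      show "K \<noteq> V" using KQ[OF that] W by blast
      show "odd (card K)" using KQ[OF that] by blast
    qed
    define ES where "ES = {e \<in> E. ends e \<inter> S \<noteq> {}}"
    have sub: "bd K \<subseteq> ES \<union> bd W" if K: "K \<in> Q" for K
    proof
      fix e assume e: "e \<in> bd K"
      then have eE: "e \<in> E" unfolding bd_def by blast
      obtain p where p: "p \<in> ends e" "p \<in> K" using e unfolding bd_def by blast
      obtain r where r: "r \<in> ends e" "r \<notin> K" using e unfolding bd_def by blast
      have pr: "p \<noteq> r" using p r by blast
      show "e \<in> ES \<union> bd W"
      proof (cases "r \<in> S")
        case True then show ?thesis using eE r unfolding ES_def by blast
      next
        case rS: False
        show ?thesis
        proof (cases "r \<in> W")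
          case True
          have "adj p r" using adj_of_edge[OF eE p(1) r(1) pr] by simp
          then have "r \<in> K" using sg.cmps_closed[OF sg_adj KQ(1)[OF K]] p(2) True rS by blast
          then show ?thesis using r by blast
        next
          case False
          then have "e \<in> bd W" using eE p r KQ(2)[OF K] unfolding bd_def by blast
          then show ?thesis by blast
        qed
      qed
    qed
    have disj: "bd K \<inter> bd K' = {}" if K: "K \<in> Q" "K' \<in> Q" "K \<noteq> K'" for K K'
    proof (rule ccontr)
      assume "bd K \<inter> bd K' \<noteq> {}"
      then obtain e where e: "e \<in> bd K" "e \<in> bd K'" by blast
      then have eE: "e \<in> E" unfolding bd_def by blast
      obtain p where p: "p \<in> ends e" "p \<in> K" using e unfolding bd_def by blast
      obtain r where r: "r \<in> ends e" "r \<notin> K" using e unfolding bd_def by blast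
      have pr: "p \<noteq> r" using p r by blast
      have en: "ends e = {p, r}" using adj_of_edge[OF eE p(1) r(1) pr] by simp
      have dj: "K \<inter> K' = {}" using sg.cmps_disj[OF sg_adj KQ(1)[OF K(1)] KQ(1)[OF K(2)] K(3)] .
      have "ends e \<inter> K' \<noteq> {}" using e(2) unfolding bd_def by blast
      then obtain x where x: "x \<in> ends e" "x \<in> K'" by blast
      have "p \<notin> K'" using dj p(2) by blast
      then have rK': "r \<in> K'" using x en by auto
      have "adj p r" using adj_of_edge[OF eE p(1) r(1) pr] by simp
      moreover have "r \<in> W - S" using rK' KQ(2)[OF K(2)] by blast
      ultimately have "r \<in> K" using sg.cmps_closed[OF sg_adj KQ(1)[OF K(1)]] p(2) by blast
      then show False using r by blast
    qed
    have "3 * card Q = (\<Sum>K\<in>Q. 3)" by simp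
    also have "\<dots> \<le> (\<Sum>K\<in>Q. card (bd K))" using b3 by (intro sum_mono) auto
    also have "\<dots> = card (\<Union>(bd ` Q))"
    proof -
      have "\<forall>i\<in>Q. \<forall>j\<in>Q. i \<noteq> j \<longrightarrow> bd i \<inter> bd j = {}" using disj by blast
      moreover have "\<forall>i\<in>Q. finite (bd i)" using bd_fin by blast
      ultimately show ?thesis using card_UN_disjoint[OF fQ] by metis
    qed
    also have "\<dots> \<le> card (ES \<union> bd W)"
    proof (rule card_mono)
      have "ES \<subseteq> E" unfolding ES_def by blast
      then show "finite (ES \<union> bd W)" using finE bd_fin finite_subset by blast
      show "\<Union>(bd ` Q) \<subseteq> ES \<union> bd W" using sub by blast
    qed
    also have "\<dots> \<le> card ES + card (bd W)" by (rule card_Un_le)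
    also have "\<dots> \<le> card ES + 4" using W(4) by simp
    finally have c1: "3 * card Q \<le> card ES + 4" .
    have "ES = (\<Union>s\<in>S. {e \<in> E. s \<in> ends e})" unfolding ES_def by blast
    then have "card ES \<le> (\<Sum>s\<in>S. card {e \<in> E. s \<in> ends e})" using card_UN_le[OF fS] by simp
    also have "\<dots> = (\<Sum>s\<in>S. 3)" using deg3 S W(1) by (intro sum.cong) auto
    finally have "card ES \<le> 3 * card S" by simp
    with c1 have c2: "3 * card Q \<le> 3 * card S + 4" by linarith
    have "finite (W - S)" using fW by blast
    then have par: "even (card (W - S) + oddc (W - S) adj)" by (rule sg.parity[OF sg_adj])
    have "oddc (W - S) adj = card Q" unfolding oddc_def Q_def by simp
    moreover have "card (W - S) = card W - card S" using S fS by (simp add: card_Diff_subset)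
    moreover have "card S \<le> card W" using S fW by (simp add: card_mono)
    ultimately show "oddc (W - S) adj \<le> card S" using ar3[OF c2 _ W(3)] par by simp
  qed
  then show ?thesis using sg.tutte_thm[OF sg_adj fW] by blast
qed

end



locale cut = cg +
  fixes C and V1 V2
  assumes tcut: "two_cut V E ends C"
    and V1c: "V1 \<in> components V (E - C) ends" and V2c: "V2 \<in> components V (E - C) ends"
    and neq: "V1 \<noteq> V2"
begin

abbreviation "cof x \<equiv> comp_of V (E - C) ends x"

lemma CE: "C \<subseteq> E" and cC: "card C = 2" and fC: "finite C"
  using tcut finE finite_subset unfolding two_cut_def by auto

lemma comps2: "components V (E - C) ends = {V1, V2}"
proof -
  have c2: "card (components V (E - C) ends) = 2" using tcut unfolding two_cut_def by simp
  then have f: "finite (components V (E - C) ends)" by (metis card.infinite zero_neq_numeral)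
  have "{V1, V2} \<subseteq> components V (E - C) ends" using V1c V2c by blast
  moreover have "card {V1, V2} = 2" using neq by simp
  ultimately show ?thesis using c2 f by (metis card_subset_eq)
qed

lemma adj'_sym: "(a, b) \<in> adj_rel (E - C) ends \<Longrightarrow> (b, a) \<in> adj_rel (E - C) ends"
  unfolding adj_rel_def by (auto simp: insert_commute)

lemma adj'_rtr_sym: "(a, b) \<in> (adj_rel (E - C) ends)\<^sup>* \<Longrightarrow> (b, a) \<in> (adj_rel (E - C) ends)\<^sup>*"
proof (induction rule: rtrancl_induct)
  case base then show ?case by simp
next
  case (step y z)
  have "(z, y) \<in> adj_rel (E - C) ends" using adj'_sym[OF step.hyps(2)] .
  then show ?case using step.IH by (meson converse_rtrancl_into_rtrancl)
qed

lemma cof_eq: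
  assumes "w \<in> cof x" shows "cof w = cof x"
proof -
  have xw: "(x, w) \<in> (adj_rel (E - C) ends)\<^sup>*" using assms unfolding comp_of_def by simp
  have wx: "(w, x) \<in> (adj_rel (E - C) ends)\<^sup>*" using adj'_rtr_sym[OF xw] .
  show ?thesis unfolding comp_of_def
  proof (intro set_eqI iffI)
    fix y assume "y \<in> {wa \<in> V. (w, wa) \<in> (adj_rel (E - C) ends)\<^sup>*}"
    then show "y \<in> {w \<in> V. (x, w) \<in> (adj_rel (E - C) ends)\<^sup>*}" using rtrancl_trans[OF xw] by blast
  next
    fix y assume "y \<in> {wa \<in> V. (x, wa) \<in> (adj_rel (E - C) ends)\<^sup>*}"
    then show "y \<in> {wa \<in> V. (w, wa) \<in> (adj_rel (E - C) ends)\<^sup>*}" using rtrancl_trans[OF wx] by blast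
  qed
qed

lemma cof_self: "x \<in> V \<Longrightarrow> x \<in> cof x" unfolding comp_of_def by simp

lemma cof_sub: "cof x \<subseteq> V" unfolding comp_of_def by blast

lemma comp_closed:
  assumes X: "X \<in> components V (E - C) ends" and e: "e \<in> E - C" and p: "p \<in> ends e" "p \<in> X"
  shows "ends e \<subseteq> X"
proof
  fix q assume q: "q \<in> ends e"
  obtain x where x: "x \<in> V" "X = cof x" using X unfolding components_def by blast
  have xp: "(x, p) \<in> (adj_rel (E - C) ends)\<^sup>*" using p x unfolding comp_of_def by blast
  have qV: "q \<in> V" using q e endsV by blast
  show "q \<in> X"
  proof (cases "q = p")
    case True then show ?thesis using p by simp
  next
    case False
    have "ends e = {p, q}" using adj_of_edge(1)[of e p q] e p q False by blast
    then have "(p, q) \<in> adj_rel (E - C) ends" using e unfolding adj_rel_def by blast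
    then have "(x, q) \<in> (adj_rel (E - C) ends)\<^sup>*" using xp by simp
    then show ?thesis using x qV unfolding comp_of_def by blast
  qed
qed

lemma V12_disj: "V1 \<inter> V2 = {}"
proof (rule ccontr)
  assume "V1 \<inter> V2 \<noteq> {}"
  then obtain z where z: "z \<in> V1" "z \<in> V2" by blast
  obtain x1 where x1: "V1 = cof x1" using V1c unfolding components_def by blast
  obtain x2 where x2: "V2 = cof x2" using V2c unfolding components_def by blast
  have "cof z = V1" using cof_eq z(1) x1 by simp
  moreover have "cof z = V2" using cof_eq z(2) x2 by simp
  ultimately show False using neq by simp
qed

lemma V12_un: "V1 \<union> V2 = V"
proof
  show "V1 \<union> V2 \<subseteq> V" using V1c V2c cof_sub unfolding components_def by blast
  show "V \<subseteq> V1 \<union> V2"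
  proof
    fix w assume w: "w \<in> V"
    have "cof w \<in> components V (E - C) ends" using w unfolding components_def by blast
    then show "w \<in> V1 \<union> V2" using comps2 cof_self[OF w] by blast
  qed
qed

lemma V1ne: "V1 \<noteq> {}" using V1c cof_self unfolding components_def by blast
lemma V2ne: "V2 \<noteq> {}" using V2c cof_self unfolding components_def by blast
lemma V1sub: "V1 \<subseteq> V" using V12_un by blast
lemma V2sub: "V2 \<subseteq> V" using V12_un by blast

lemma bdV1: "bd V1 = C"
proof -
  have "bd V1 \<subseteq> C"
  proof
    fix e assume e: "e \<in> bd V1"
    show "e \<in> C"
    proof (rule ccontr)
      assume "e \<notin> C"
      then have "e \<in> E - C" using e unfolding bd_def by blast
      moreover obtain p where "p \<in> ends e" "p \<in> V1" using e unfolding bd_def by blast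
      ultimately have "ends e \<subseteq> V1" using comp_closed[OF V1c] by blast
      then show False using e unfolding bd_def by blast
    qed
  qed
  moreover have "V1 \<noteq> V" using V12_disj V2ne V2sub by blast
  then have "card (bd V1) \<ge> 2" using bd_ge2 V1sub V1ne by blast
  ultimately show ?thesis using cC fC by (metis card_seteq)
qed

lemma c_cross: "c \<in> C \<Longrightarrow> card (ends c \<inter> V1) = 1"
proof -
  assume c: "c \<in> C"
  then have "c \<in> bd V1" using bdV1 by simp
  moreover then have "\<not> ends c \<subseteq> V1" unfolding bd_def by blast
  ultimately show ?thesis using card_ends_K[of c V1] c CE by auto
qed

lemma evenV1: "even (card V1)"
proof -
  have "3 * card V1 = 2 * card {e \<in> E. ends e \<subseteq> V1} + 2" using bd_count[OF V1sub] bdV1 cC by simp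
  then have "even (3 * card V1)" by simp
  then show ?thesis by simp
qed

lemma atmost1:
  assumes x: "x \<in> V1"
  shows "card {c \<in> C. x \<in> ends c} \<le> 1"
proof (rule ccontr)
  assume "\<not> ?thesis"
  then have "card C \<le> card {c \<in> C. x \<in> ends c}" using cC by simp
  then have allC: "{c \<in> C. x \<in> ends c} = C" using fC by (intro card_seteq) auto
  define K' where "K' = V2 \<union> {x}"
  have xV: "x \<in> V" using x V1sub by blast
  have CD: "C \<subseteq> {e \<in> E. x \<in> ends e}" using allC CE by blast
  have c1: "card ({e \<in> E. x \<in> ends e} - C) = 1"
    using card_Diff_subset[OF fC CD] deg3[OF xV] cC by simp
  then obtain f where "{e \<in> E. x \<in> ends e} - C = {f}" by (rule card_1_singletonE)
  then have f: "f \<in> E - C" "x \<in> ends f" by auto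
  have fV1: "ends f \<subseteq> V1" using comp_closed[OF V1c f(1) f(2) x] .
  obtain a b where ab: "ends f = {a, b}" "a \<noteq> b" using ends_pair f(1) by blast
  obtain d where d: "d \<in> ends f" "d \<noteq> x"
  proof (cases "a = x")
    case True then show ?thesis using that[of b] ab by auto
  next
    case False then show ?thesis using that[of a] ab by auto
  qed
  have dK: "d \<notin> K'" using d fV1 V12_disj unfolding K'_def by blast
  have dV: "d \<in> V" using d fV1 V1sub by blast
  have K'V: "K' \<subseteq> V" using V2sub xV unfolding K'_def by blast
  have "bd K' \<subseteq> {e \<in> E. x \<in> ends e} - C"
  proof
    fix e assume e: "e \<in> bd K'"
    then have eE: "e \<in> E" unfolding bd_def by blast
    show "e \<in> {e \<in> E. x \<in> ends e} - C"
    proof (cases "e \<in> C")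
      case True
      then have xe: "x \<in> ends e" using allC by blast
      have "card (ends e \<inter> V1) = 1" using c_cross True .
      then obtain y where y: "ends e \<inter> V1 = {y}" by (rule card_1_singletonE)
      have "x \<in> ends e \<inter> V1" using xe x by blast
      then have "ends e \<inter> V1 = {x}" using y by simp
      then have "ends e \<subseteq> K'" using endsV[OF eE] V12_un unfolding K'_def by blast
      then show ?thesis using e unfolding bd_def by blast
    next
      case False
      obtain p where p: "p \<in> ends e" "p \<in> K'" using e unfolding bd_def by blast
      show ?thesis
      proof (cases "p \<in> V2")
        case True
        have "ends e \<subseteq> V2" using comp_closed[OF V2c _ p(1) True] eE False by blast
        then show ?thesis using e unfolding bd_def K'_def by blast
      next
        case pn: False
        then have "p = x" using p unfolding K'_def by blast
        then show ?thesis using p eE False by blast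
      qed
    qed
  qed
  moreover have "finite ({e \<in> E. x \<in> ends e} - C)" using finE by simp
  ultimately have "card (bd K') \<le> card ({e \<in> E. x \<in> ends e} - C)" by (intro card_mono)
  then have "card (bd K') \<le> 1" using c1 by simp
  moreover have "card (bd K') \<ge> 2" using bd_ge2[OF K'V] dK dV unfolding K'_def by blast
  ultimately show False by simp
qed

lemma degEC:
  assumes x: "x \<in> V1"
  shows "degree (E - C) ends x = 3 - card {c \<in> C. x \<in> ends c}"
proof -
  have "{e \<in> E - C. x \<in> ends e} = {e \<in> E. x \<in> ends e} - {c \<in> C. x \<in> ends c}" by blast
  moreover have "{c \<in> C. x \<in> ends c} \<subseteq> {e \<in> E. x \<in> ends e}" using CE by blast
  moreover have "finite {c \<in> C. x \<in> ends c}" using fC by simp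
  ultimately show ?thesis unfolding degree_def using deg3 x V1sub
    by (simp add: card_Diff_subset subset_iff)
qed

lemma cnt01: "x \<in> V1 \<Longrightarrow> card {c \<in> C. x \<in> ends c} = (if \<exists>c\<in>C. x \<in> ends c then 1 else 0)"
proof -
  assume x: "x \<in> V1"
  have f: "finite {c \<in> C. x \<in> ends c}" using fC by simp
  show ?thesis
  proof (cases "\<exists>c\<in>C. x \<in> ends c")
    case True
    then have "card {c \<in> C. x \<in> ends c} \<noteq> 0" using f by auto
    then show ?thesis using atmost1[OF x] True by simp
  next
    case False
    then have em: "{c \<in> C. x \<in> ends c} = {}" by blast
    have "card {c \<in> C. x \<in> ends c} = 0" unfolding em by simp
    then show ?thesis using False by presburger
  qed
qed

lemma mends_None: "marked_ends E ends C V1 None = {u \<in> V1. \<exists>c\<in>C. u \<in> ends c}"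
  unfolding marked_ends_def using degEC cnt01 by (auto split: if_splits)

end

lemma cut_swap: "cut V E ends C V1 V2 \<Longrightarrow> cut V E ends C V2 V1"
  unfolding cut_def cut_axioms_def by auto




context cg begin

definition pedge :: "('v \<Rightarrow> 'v) \<Rightarrow> 'v \<Rightarrow> 'e" where
  "pedge m u = (SOME e. e \<in> E \<and> ends e = {u, m u})"

lemma pedge_prop:
  assumes "perfect W adj m" "u \<in> W"
  shows "pedge m u \<in> E" "ends (pedge m u) = {u, m u}"
proof -
  have "adj u (m u)" using assms unfolding perfect_def by blast
  then have "\<exists>e. e \<in> E \<and> ends e = {u, m u}" unfolding adj_def by blast
  then have "pedge m u \<in> E \<and> ends (pedge m u) = {u, m u}" unfolding pedge_def by (rule someI_ex)
  then show "pedge m u \<in> E" "ends (pedge m u) = {u, m u}" by auto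
qed

lemma pedge_sym:
  assumes "m (m u) = u"
  shows "pedge m (m u) = pedge m u"
proof -
  have "{m u, m (m u)} = {u, m u}" using assms by auto
  then show ?thesis unfolding pedge_def by simp
qed

lemma pedge_sub:
  assumes "perfect W adj m"
  shows "pedge m ` W \<subseteq> E" "\<And>e. e \<in> pedge m ` W \<Longrightarrow> ends e \<subseteq> W"
proof -
  show "pedge m ` W \<subseteq> E" using pedge_prop[OF assms] by blast
  fix e assume "e \<in> pedge m ` W"
  then obtain w where w: "w \<in> W" "e = pedge m w" by blast
  then show "ends e \<subseteq> W" using pedge_prop[OF assms w(1)] assms unfolding perfect_def by auto
qed

lemma pedge_in:
  assumes pm: "perfect W adj m" and u: "u \<in> W"
  shows "{e \<in> pedge m ` W. u \<in> ends e} = {pedge m u}"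
proof
  show "{pedge m u} \<subseteq> {e \<in> pedge m ` W. u \<in> ends e}" using pedge_prop[OF pm u] u by auto
  show "{e \<in> pedge m ` W. u \<in> ends e} \<subseteq> {pedge m u}"
  proof
    fix e assume e: "e \<in> {e \<in> pedge m ` W. u \<in> ends e}"
    then obtain w where w: "w \<in> W" "e = pedge m w" "u \<in> ends e" by blast
    then have "u = w \<or> u = m w" using pedge_prop[OF pm w(1)] by auto
    then show "e \<in> {pedge m u}"
    proof
      assume "u = w" then show ?thesis using w by simp
    next
      assume uw: "u = m w"
      have "m (m w) = w" using pm w(1) unfolding perfect_def by blast
      then have "pedge m (m w) = pedge m w" by (rule pedge_sym)
      then show ?thesis using w uw by simp
    qed
  qed
qed

lemma pedge_out:
  assumes pm: "perfect W adj m" and u: "u \<notin> W"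
  shows "{e \<in> pedge m ` W. u \<in> ends e} = {}"
  using pedge_sub(2)[OF pm] u by blast

end

context cut begin

lemma this_cut: "cut V E ends C V1 V2"
  using tc cub tcut V1c V2c neq unfolding cut_def cut_axioms_def cg_def by blast

lemma deg_eq:
  assumes M: "M \<subseteq> E" "M \<inter> C = {} \<or> C \<subseteq> M"
    and M1S: "{e. Some e \<in> M1} = {e \<in> M - C. ends e \<subseteq> V1}"
    and M1N: "None \<in> M1 \<longleftrightarrow> C \<subseteq> M"
    and u: "u \<in> V1"
  shows "degree M ends u = degree M1 (marked_ends E ends C V1) u"
proof -
  let ?F = "{e \<in> M - C. ends e \<subseteq> V1 \<and> u \<in> ends e}"
  let ?G = "{e \<in> M \<inter> C. u \<in> ends e}"
  have fM: "finite M" using M(1) finE finite_subset by blast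
  have A: "{e \<in> M. u \<in> ends e} = ?F \<union> ?G"
  proof (intro set_eqI iffI)
    fix e assume e: "e \<in> {e \<in> M. u \<in> ends e}"
    show "e \<in> ?F \<union> ?G"
    proof (cases "e \<in> C")
      case True then show ?thesis using e by blast
    next
      case False
      then have "e \<in> E - C" using e M(1) by blast
      then have "ends e \<subseteq> V1" using comp_closed[OF V1c _ _ u] e by blast
      then show ?thesis using e False by blast
    qed
  qed blast
  have "degree M ends u = card ?F + card ?G"
    unfolding degree_def A using fM by (intro card_Un_disjoint) auto
  moreover have "card ?G = (if C \<subseteq> M \<and> (\<exists>c\<in>C. u \<in> ends c) then 1 else 0)"
  proof (cases "C \<subseteq> M")
    case True
    then have "?G = {c \<in> C. u \<in> ends c}" by blast
    then show ?thesis using cnt01[OF u] True by simp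
  next
    case False
    then have em: "?G = {}" using M(2) by blast
    have "card ?G = 0" unfolding em by simp
    then show ?thesis using False by simp
  qed
  moreover have B: "{x \<in> M1. u \<in> marked_ends E ends C V1 x} =
      Some ` ?F \<union> (if None \<in> M1 \<and> u \<in> marked_ends E ends C V1 None then {None} else {})"
  proof (intro set_eqI iffI)
    fix x assume x: "x \<in> {x \<in> M1. u \<in> marked_ends E ends C V1 x}"
    show "x \<in> Some ` ?F \<union> (if None \<in> M1 \<and> u \<in> marked_ends E ends C V1 None then {None} else {})"
    proof (cases x)
      case None then show ?thesis using x by auto
    next
      case (Some e)
      then have "e \<in> {e. Some e \<in> M1}" using x by simp
      then have "e \<in> {e \<in> M - C. ends e \<subseteq> V1}" using M1S by simp
      moreover have "u \<in> ends e" using x Some unfolding marked_ends_def by simp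
      ultimately show ?thesis using Some by blast
    qed
  next
    fix x assume x: "x \<in> Some ` ?F \<union> (if None \<in> M1 \<and> u \<in> marked_ends E ends C V1 None then {None} else {})"
    show "x \<in> {x \<in> M1. u \<in> marked_ends E ends C V1 x}"
    proof (cases x)
      case None then show ?thesis using x by (auto split: if_splits)
    next
      case (Some e)
      then have "e \<in> ?F" using x by (auto split: if_splits)
      then have "Some e \<in> M1" using M1S by blast
      then show ?thesis using Some \<open>e \<in> ?F\<close> unfolding marked_ends_def by simp
    qed
  qed
  have "degree M1 (marked_ends E ends C V1) u = card (Some ` ?F) + (if None \<in> M1 \<and> u \<in> marked_ends E ends C V1 None then 1 else 0)"
    unfolding degree_def B using fM by (subst card_Un_disjoint) auto
  moreover have "card (Some ` ?F) = card ?F" by (simp add: card_image)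
  moreover have "u \<in> marked_ends E ends C V1 None \<longleftrightarrow> (\<exists>c\<in>C. u \<in> ends c)" using mends_None u by simp
  ultimately show ?thesis using M1N by simp
qed

end




context cut begin

lemma sw: "cut V E ends C V2 V1" using cut_swap[OF this_cut] .

lemma bdV2: "bd V2 = C" using cut.bdV1[OF sw] .
lemma evenV2: "even (card V2)" using cut.evenV1[OF sw] .
lemma cnt01_2: "x \<in> V2 \<Longrightarrow> card {c \<in> C. x \<in> ends c} = (if \<exists>c\<in>C. x \<in> ends c then 1 else 0)"
  using cut.cnt01[OF sw] .
lemma degEC2: "x \<in> V2 \<Longrightarrow> degree (E - C) ends x = 3 - card {c \<in> C. x \<in> ends c}"
  using cut.degEC[OF sw] .
lemma c_cross2: "c \<in> C \<Longrightarrow> card (ends c \<inter> V2) = 1" using cut.c_cross[OF sw] .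

lemma fwd:
  assumes v: "v \<in> V1" and M: "v_matching V E ends v M"
  shows "lambda_matchable V1 (marked_edges E ends C V1) (marked_ends E ends C V1) v"
proof -
  have ME: "M \<subseteq> E" and Mv: "degree M ends v = 3" and Mu: "\<forall>u\<in>V - {v}. degree M ends u = 1"
    using M unfolding v_matching_def by auto
  have fM: "finite M" using ME finE finite_subset by blast
  have fV1: "finite V1" using V1sub finV finite_subset by blast
  have "(\<Sum>u\<in>V1. card {e \<in> M. u \<in> ends e}) = (\<Sum>u\<in>V1. 1 + (if u = v then 2 else 0))"
  proof (rule sum.cong[OF refl])
    fix u assume u: "u \<in> V1"
    show "card {e \<in> M. u \<in> ends e} = 1 + (if u = v then 2 else 0)"
      using Mv Mu u V1sub unfolding degree_def by auto
  qed
  also have "\<dots> = (\<Sum>u\<in>V1. 1) + (\<Sum>u\<in>V1. if u = v then 2 else 0)" by (rule sum.distrib)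
  also have "\<dots> = card V1 + 2" using fV1 v by simp
  finally have L: "(\<Sum>u\<in>V1. card {e \<in> M. u \<in> ends e}) = card V1 + 2" .
  have "(\<Sum>e\<in>M. card (ends e \<inter> V1)) = (\<Sum>e\<in>M. 2 * (if ends e \<subseteq> V1 then 1 else 0) + (if e \<in> C then 1 else 0))"
  proof (rule sum.cong[OF refl])
    fix e assume "e \<in> M"
    then have "e \<in> E" using ME by blast
    show "card (ends e \<inter> V1) = 2 * (if ends e \<subseteq> V1 then 1 else 0) + (if e \<in> C then 1 else 0)"
      using card_ends_K[OF \<open>e \<in> E\<close>, of V1] bdV1 by simp
  qed
  also have "\<dots> = 2 * (\<Sum>e\<in>M. (if ends e \<subseteq> V1 then 1 else 0)) + (\<Sum>e\<in>M. (if e \<in> C then 1 else 0))"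
    by (simp add: sum.distrib sum_distrib_left)
  also have "\<dots> = 2 * card {e \<in> M. ends e \<subseteq> V1} + card {e \<in> M. e \<in> C}"
    using card_filter_sum[OF fM] by simp
  finally have R: "(\<Sum>e\<in>M. card (ends e \<inter> V1)) = 2 * card {e \<in> M. ends e \<subseteq> V1} + card {e \<in> M. e \<in> C}" .
  have eq: "card V1 + 2 = 2 * card {e \<in> M. ends e \<subseteq> V1} + card {e \<in> M. e \<in> C}"
    using L R handshake[OF fM fV1, of ends] by simp
  have "{e \<in> M. e \<in> C} = M \<inter> C" by blast
  then have eq2: "card V1 + 2 = 2 * card {e \<in> M. ends e \<subseteq> V1} + card (M \<inter> C)" using eq by simp
  have "even (card V1 + 2)" using evenV1 by simp
  then have "even (2 * card {e \<in> M. ends e \<subseteq> V1} + card (M \<inter> C))" unfolding eq2 .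
  then have evMC: "even (card (M \<inter> C))" by simp
  have le2: "card (M \<inter> C) \<le> 2" using card_mono[OF fC Int_lower2[of M C]] cC by simp
  have "card (M \<inter> C) \<noteq> 1" using evMC by auto
  then have "card (M \<inter> C) = 0 \<or> card (M \<inter> C) = 2" using le2 by linarith
  then have MC: "M \<inter> C = {} \<or> C \<subseteq> M"
  proof
    assume "card (M \<inter> C) = 0" then show ?thesis using fC by simp
  next
    assume "card (M \<inter> C) = 2"
    then have "M \<inter> C = C" using fC cC by (intro card_seteq) auto
    then show ?thesis by blast
  qed
  define M1 where "M1 = Some ` {e \<in> M - C. ends e \<subseteq> V1} \<union> (if C \<subseteq> M then {None} else {})"
  have M1S: "{e. Some e \<in> M1} = {e \<in> M - C. ends e \<subseteq> V1}" unfolding M1_def by auto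
  have M1N: "None \<in> M1 \<longleftrightarrow> C \<subseteq> M" unfolding M1_def by auto
  have deq: "degree M ends u = degree M1 (marked_ends E ends C V1) u" if "u \<in> V1" for u
    using deg_eq[OF ME MC M1S M1N that] .
  have "M1 \<subseteq> marked_edges E ends C V1" unfolding M1_def marked_edges_def using ME by auto
  moreover have "degree M1 (marked_ends E ends C V1) v = 3" using deq[OF v] Mv by simp
  moreover have "\<forall>u\<in>V1 - {v}. degree M1 (marked_ends E ends C V1) u = 1"
  proof
    fix u assume u: "u \<in> V1 - {v}"
    then have "u \<in> V - {v}" using V1sub by blast
    then have "degree M ends u = 1" using Mu by blast
    then show "degree M1 (marked_ends E ends C V1) u = 1" using deq u by simp
  qed
  ultimately show ?thesis unfolding lambda_matchable_def v_matching_def using v by blast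
qed

lemma B2_props:
  obtains b1 b2 where "{u \<in> V2. \<exists>c\<in>C. u \<in> ends c} = {b1, b2}" "b1 \<noteq> b2"
proof -
  obtain c1 c2 where C12: "C = {c1, c2}" "c1 \<noteq> c2" using cC by (metis card_2_iff)
  obtain b1 where b1: "ends c1 \<inter> V2 = {b1}" using c_cross2[of c1] C12 by (metis card_1_singletonE insertI1)
  obtain b2 where b2: "ends c2 \<inter> V2 = {b2}" using c_cross2[of c2] C12 by (metis card_1_singletonE insertCI)
  have "b1 \<noteq> b2"
  proof
    assume "b1 = b2"
    then have "{c \<in> C. b1 \<in> ends c} = C" using b1 b2 C12 by blast
    moreover have "b1 \<in> V2" using b1 by blast
    ultimately show False using cnt01_2[of b1] cC by (simp split: if_splits)
  qed
  moreover have "{u \<in> V2. \<exists>c\<in>C. u \<in> ends c} = {b1, b2}" using b1 b2 C12 by blast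
  ultimately show ?thesis using that by blast
qed

lemma bwd:
  assumes v: "v \<in> V1" and M1: "v_matching V1 (marked_edges E ends C V1) (marked_ends E ends C V1) v M1"
  shows "lambda_matchable V E ends v"
proof -
  have M1E: "M1 \<subseteq> marked_edges E ends C V1" and M1v: "degree M1 (marked_ends E ends C V1) v = 3"
    and M1u: "\<forall>u\<in>V1 - {v}. degree M1 (marked_ends E ends C V1) u = 1"
    using M1 unfolding v_matching_def by auto
  define S1 where "S1 = {e. Some e \<in> M1}"
  have S1E: "S1 \<subseteq> E - C" "\<And>e. e \<in> S1 \<Longrightarrow> ends e \<subseteq> V1"
    using M1E unfolding S1_def marked_edges_def by auto
  define B2 where "B2 = {u \<in> V2. \<exists>c\<in>C. u \<in> ends c}"
  define W where "W = (if None \<in> M1 then V2 - B2 else V2)"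
  have WV2: "W \<subseteq> V2" unfolding W_def by auto
  have fV2: "finite V2" using V2sub finV finite_subset by blast
  have WW: "even (card W) \<and> card (bd W) \<le> 4"
    proof (cases "None \<in> M1")
      case False
      then show ?thesis using evenV2 bdV2 cC unfolding W_def by simp
    next
      case True
      obtain b1 b2 where b12: "B2 = {b1, b2}" "b1 \<noteq> b2" using B2_props unfolding B2_def by blast
      have bV2: "b1 \<in> V2" "b2 \<in> V2" using b12 unfolding B2_def by auto
      have "card W = card V2 - 2" unfolding W_def using True b12 bV2 fV2 by (simp add: card_Diff_subset)
      moreover have "card V2 \<ge> 2" using bV2 b12 fV2 by (metis card_2_iff card_mono empty_subsetI insert_subset)
      ultimately have evW: "even (card W)" using evenV2 by (simp add: even_diff_nat)
      have deg2: "card {e \<in> E - C. b \<in> ends e} = 2" if "b \<in> B2" for b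
      proof -
        have "b \<in> V2" "\<exists>c\<in>C. b \<in> ends c" using that unfolding B2_def by auto
        then show ?thesis using degEC2 cnt01_2 unfolding degree_def by simp
      qed
      have "bd W \<subseteq> {e \<in> E - C. b1 \<in> ends e} \<union> {e \<in> E - C. b2 \<in> ends e}"
      proof
        fix e assume e: "e \<in> bd W"
        then have eE: "e \<in> E" unfolding bd_def by blast
        obtain p where p: "p \<in> ends e" "p \<in> W" using e unfolding bd_def by blast
        obtain r where r: "r \<in> ends e" "r \<notin> W" using e unfolding bd_def by blast
        have eC: "e \<notin> C"
        proof
          assume "e \<in> C"
          then have "p \<in> B2" using p WV2 unfolding B2_def by blast
          then show False using p True unfolding W_def by simp
        qed
        have "ends e \<subseteq> V2" using comp_closed[OF V2c _ p(1)] p WV2 eE eC by blast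
        then have "r \<in> B2" using r True unfolding W_def by auto
        then show "e \<in> {e \<in> E - C. b1 \<in> ends e} \<union> {e \<in> E - C. b2 \<in> ends e}"
          using b12 r eE eC by auto
      qed
      then have "card (bd W) \<le> card ({e \<in> E - C. b1 \<in> ends e} \<union> {e \<in> E - C. b2 \<in> ends e})"
        using finE by (intro card_mono) auto
      also have "\<dots> \<le> card {e \<in> E - C. b1 \<in> ends e} + card {e \<in> E - C. b2 \<in> ends e}" by (rule card_Un_le)
      also have "\<dots> = 4" using deg2 b12 by simp
      finally show ?thesis using evW by simp
    qed
  have "\<exists>m. perfect W adj m"
  proof (rule pm_exists)
    show "W \<subseteq> V" using WV2 V2sub by blast
    show "W \<noteq> V" using WV2 V12_disj V1ne V1sub by blast
    show "even (card W)" using WW by blast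
    show "card (bd W) \<le> 4" using WW by blast
  qed
  then obtain m where pm: "perfect W adj m" by blast
  define P where "P = pedge m ` W"
  define CM where "CM = (if None \<in> M1 then C else {})"
  define M where "M = S1 \<union> CM \<union> P"
  have PE: "P \<subseteq> E" using pedge_sub(1)[OF pm] P_def by simp
  have PW: "\<And>e. e \<in> P \<Longrightarrow> ends e \<subseteq> W" using pedge_sub(2)[OF pm] P_def by simp
  have ME: "M \<subseteq> E" unfolding M_def CM_def using S1E PE CE by auto
  have PC: "P \<inter> C = {}"
  proof (rule ccontr)
    assume "P \<inter> C \<noteq> {}"
    then obtain e where e: "e \<in> P" "e \<in> C" by blast
    have "card (ends e \<inter> V1) = 1" using c_cross e(2) .
    then have "ends e \<inter> V1 \<noteq> {}" by auto
    moreover have "ends e \<subseteq> V2" using PW[OF e(1)] WV2 by blast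
    ultimately show False using V12_disj by blast
  qed
  have MC: "M \<inter> C = {} \<or> C \<subseteq> M"
  proof (cases "None \<in> M1")
    case True then show ?thesis unfolding M_def CM_def by auto
  next
    case False
    then have "M \<inter> C = {}" unfolding M_def CM_def using S1E PC by auto
    then show ?thesis by blast
  qed
  have M1S: "{e. Some e \<in> M1} = {e \<in> M - C. ends e \<subseteq> V1}"
  proof (intro set_eqI iffI)
    fix e assume "e \<in> {e. Some e \<in> M1}"
    then have "e \<in> S1" unfolding S1_def by simp
    then show "e \<in> {e \<in> M - C. ends e \<subseteq> V1}" using S1E unfolding M_def by blast
  next
    fix e assume e: "e \<in> {e \<in> M - C. ends e \<subseteq> V1}"
    show "e \<in> {e. Some e \<in> M1}"
    proof (cases "e \<in> P")
      case True
      then have "ends e \<subseteq> V1 \<inter> V2" using e PW WV2 by blast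
      then have "ends e = {}" using V12_disj by blast
      moreover have "card (ends e) = 2" using ends2 PE True by blast
      ultimately show ?thesis by simp
    next
      case False
      then show ?thesis using e unfolding M_def CM_def S1_def by (auto split: if_splits)
    qed
  qed
  have M1N: "None \<in> M1 \<longleftrightarrow> C \<subseteq> M"
  proof
    assume "None \<in> M1" then show "C \<subseteq> M" unfolding M_def CM_def by auto
  next
    assume CM': "C \<subseteq> M"
    show "None \<in> M1"
    proof (rule ccontr)
      assume "None \<notin> M1"
      then have "M \<inter> C = {}" unfolding M_def CM_def using S1E PC by auto
      then have "C = {}" using CM' by blast
      then show False using cC by simp
    qed
  qed
  have deq: "degree M ends u = degree M1 (marked_ends E ends C V1) u" if "u \<in> V1" for u
    using deg_eq[OF ME MC M1S M1N that] .
  have d2: "degree M ends u = 1" if u: "u \<in> V2" for u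
  proof -
    have uV1: "u \<notin> V1" using u V12_disj by blast
    have "{e \<in> M. u \<in> ends e} = {e \<in> CM. u \<in> ends e} \<union> {e \<in> P. u \<in> ends e}"
      unfolding M_def using S1E(2) uV1 by blast
    moreover have "{e \<in> CM. u \<in> ends e} \<inter> {e \<in> P. u \<in> ends e} = {}" using PC unfolding CM_def by auto
    moreover have "finite CM" "finite P" using fC PE finE finite_subset unfolding CM_def by auto
    ultimately have cu: "degree M ends u = card {e \<in> CM. u \<in> ends e} + card {e \<in> P. u \<in> ends e}"
      unfolding degree_def by (simp add: card_Un_disjoint)
    show ?thesis
    proof (cases "None \<in> M1")
      case True
      show ?thesis
      proof (cases "u \<in> B2")
        case True2: True
        have "{e \<in> CM. u \<in> ends e} = {c \<in> C. u \<in> ends c}" unfolding CM_def using True by simp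
        moreover have "card {c \<in> C. u \<in> ends c} = 1" using cnt01_2[OF u] True2 unfolding B2_def by simp
        moreover have "u \<notin> W" using True True2 unfolding W_def by simp
        ultimately show ?thesis using cu pedge_out[OF pm] unfolding P_def by simp
      next
        case False
        have em: "{e \<in> CM. u \<in> ends e} = {}" unfolding CM_def using True False u unfolding B2_def by auto
        have "card {e \<in> CM. u \<in> ends e} = 0" unfolding em by simp
        moreover have "u \<in> W" using True False u unfolding W_def by simp
        ultimately show ?thesis using cu pedge_in[OF pm] unfolding P_def by simp
      qed
    next
      case False
      have em: "{e \<in> CM. u \<in> ends e} = {}" unfolding CM_def using False by simp
      have "card {e \<in> CM. u \<in> ends e} = 0" unfolding em by simp
      moreover have "u \<in> W" using False u unfolding W_def by simp
      ultimately show ?thesis using cu pedge_in[OF pm] unfolding P_def by simp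
    qed
  qed
  have "v_matching V E ends v M"
    unfolding v_matching_def
  proof (intro conjI ballI)
    show "M \<subseteq> E" by (rule ME)
    show "degree M ends v = 3" using deq[OF v] M1v by simp
    fix u assume u: "u \<in> V - {v}"
    then have "u \<in> V1 - {v} \<or> u \<in> V2" using V12_un by blast
    then show "degree M ends u = 1"
    proof
      assume "u \<in> V1 - {v}" then show ?thesis using deq M1u by simp
    next
      assume "u \<in> V2" then show ?thesis using d2 by simp
    qed
  qed
  then show ?thesis unfolding lambda_matchable_def using v V1sub by blast
qed

lemma main_iff:
  assumes "v \<in> V1"
  shows "lambda_matchable V E ends v \<longleftrightarrow>
           lambda_matchable V1 (marked_edges E ends C V1) (marked_ends E ends C V1) v"
proof
  assume "lambda_matchable V E ends v"
  then obtain M where "v_matching V E ends v M" unfolding lambda_matchable_def by blast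
  then show "lambda_matchable V1 (marked_edges E ends C V1) (marked_ends E ends C V1) v"
    using fwd assms by blast
next
  assume "lambda_matchable V1 (marked_edges E ends C V1) (marked_ends E ends C V1) v"
  then obtain M1 where "v_matching V1 (marked_edges E ends C V1) (marked_ends E ends C V1) v M1"
    unfolding lambda_matchable_def by blast
  then show "lambda_matchable V E ends v" using bwd assms by blast
qed

lemma count:
  "lambda_count V E ends =
     lambda_count V1 (marked_edges E ends C V1) (marked_ends E ends C V1)
   + lambda_count V2 (marked_edges E ends C V2) (marked_ends E ends C V2)"
proof -
  have "{v \<in> V. lambda_matchable V E ends v} =
        {v \<in> V1. lambda_matchable V E ends v} \<union> {v \<in> V2. lambda_matchable V E ends v}"
    using V12_un by blast
  moreover have "{v \<in> V1. lambda_matchable V E ends v} =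
      {v \<in> V1. lambda_matchable V1 (marked_edges E ends C V1) (marked_ends E ends C V1) v}"
    using main_iff by blast
  moreover have "{v \<in> V2. lambda_matchable V E ends v} =
      {v \<in> V2. lambda_matchable V2 (marked_edges E ends C V2) (marked_ends E ends C V2) v}"
    using cut.main_iff[OF sw] by blast
  moreover have "finite V1" "finite V2" using V1sub V2sub finV finite_subset by blast+
  ultimately show ?thesis unfolding lambda_count_def using V12_disj
    by (simp add: card_Un_disjoint disjoint_iff)
qed

end

theorem lemma3p9:
  fixes V :: "'v set" and E :: "'e set" and ends :: "'e \<Rightarrow> 'v set"
    and C :: "'e set" and V1 V2 :: "'v set" and v :: 'v
  assumes "two_connected V E ends" and "cubic V E ends"
    and "two_cut V E ends C"
    and "V1 \<in> components V (E - C) ends" and "V2 \<in> components V (E - C) ends" and "V1 \<noteq> V2"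
    and "v \<in> V1"
  shows "(lambda_matchable V E ends v \<longleftrightarrow>
           lambda_matchable V1 (marked_edges E ends C V1) (marked_ends E ends C V1) v)
       \<and> lambda_count V E ends =
           lambda_count V1 (marked_edges E ends C V1) (marked_ends E ends C V1)
         + lambda_count V2 (marked_edges E ends C V2) (marked_ends E ends C V2)"
proof -
  interpret cut V E ends C V1 V2
    using assms unfolding cut_def cut_axioms_def cg_def by blast
  show ?thesis using main_iff[OF assms(7)] count by blast
qed


end
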